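(* $\mathbf{K}^{\nabla\bullet}$ is sound and strongly complete with respect to the class of all frames: for every set $\Gamma\cup\{\phi\}\subseteq\mathcal{L}(\nabla,\bullet)$, $\Gamma\vdash_{\mathbf{K}^{\nabla\bullet}}\phi$ iff for every Kripke model $\mathcal{M}$ and state $s$, if $\mathcal{M},s\vDash\Gamma$ then $\mathcal{M},s\vDash\phi$.
   Context: $\mathcal{L}(\nabla,\bullet)$: $\phi::=p\mid\neg\phi\mid\phi\land\phi\mid\nabla\phi\mid\bullet\phi$ over a nonempty set $\mathbf{P}$ of propositional variables; $\Delta\phi:=\neg\nabla\phi$, $\circ\phi:=\neg\bullet\phi$. Kripke models $\langle S,R,V\rangle$ ($S\neq\emptyset$, $R\subseteq S\times S$, $V:\mathbf{P}\to\mathcal{P}(S)$): $s\vDash\nabla\phi$ iff there are $t,u$ with $sRt$, $sRu$, $t\vDash\phi$, $u\nvDash\phi$; $s\vDash\bullet\phi$ iff $s\vDash\phi$ and there is $t$ with $sRt$, $t\nvDash\phi$. The Hilbert system $\mathbf{K}^{\nabla\bullet}$ has axioms: A0 all propositional tautologies; A1 $\bullet\phi\to\phi$; A2 $\nabla\phi\leftrightarrow\nabla\neg\phi$; A3 $\bullet(\psi\to\phi)\land\phi\to\bullet\phi$; A4 $\nabla(\phi\land\psi)\to\nabla\phi\vee\nabla\psi$; A5 $\bullet(\phi\land\psi)\to\bullet\phi\vee\bullet\psi$; A6 $\nabla\phi\to\bullet\phi\vee\bullet\neg\phi$; A7 $\bullet(\phi\to\psi)\land\bullet(\neg\phi\to\chi)\to\nabla\phi$;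 rules R1 $\phi/\Delta\phi$; R2 $\phi/\circ\phi$; R3 $\phi\leftrightarrow\psi/\Delta\phi\leftrightarrow\Delta\psi$; R4 $\phi\leftrightarrow\psi/\circ\phi\leftrightarrow\circ\psi$; MP. $\Gamma\vdash\phi$ means $\vdash(\gamma_1\land\dots\land\gamma_n)\to\phi$ for some finite $\{\gamma_1,\dots,\gamma_n\}\subseteq\Gamma$. *)

theory Defs
  imports Main
begin

datatype 'p fm = Atom 'p | Neg "'p fm" | And "'p fm" "'p fm"
  | Nabla "'p fm" | Bullet "'p fm"

definition Imp :: "'p fm \<Rightarrow> 'p fm \<Rightarrow> 'p fm" where
  "Imp a b = Neg (And a (Neg b))"
definition Or :: "'p fm \<Rightarrow> 'p fm \<Rightarrow> 'p fm" where
  "Or a b = Neg (And (Neg a) (Neg b))"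
definition Iff :: "'p fm \<Rightarrow> 'p fm \<Rightarrow> 'p fm" where
  "Iff a b = And (Imp a b) (Imp b a)"
definition Delta :: "'p fm \<Rightarrow> 'p fm" where
  "Delta a = Neg (Nabla a)"
definition Circ :: "'p fm \<Rightarrow> 'p fm" where
  "Circ a = Neg (Bullet a)"

fun peval :: "('p fm \<Rightarrow> bool) \<Rightarrow> 'p fm \<Rightarrow> bool" where
  "peval f (Atom p) = f (Atom p)"
| "peval f (Neg a) = (\<not> peval f a)"
| "peval f (And a b) = (peval f a \<and> peval f b)"
| "peval f (Nabla a) = f (Nabla a)"
| "peval f (Bullet a) = f (Bullet a)"

definition tautology :: "'p fm \<Rightarrow> bool" where
  "tautology a = (\<forall>f. peval f a)"

inductive derivable :: "'p fm \<Rightarrow> bool" where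
  A0: "tautology a \<Longrightarrow> derivable a"
| A1: "derivable (Imp (Bullet a) a)"
| A2: "derivable (Iff (Nabla a) (Nabla (Neg a)))"
| A3: "derivable (Imp (And (Bullet (Imp b a)) a) (Bullet a))"
| A4: "derivable (Imp (Nabla (And a b)) (Or (Nabla a) (Nabla b)))"
| A5: "derivable (Imp (Bullet (And a b)) (Or (Bullet a) (Bullet b)))"
| A6: "derivable (Imp (Nabla a) (Or (Bullet a) (Bullet (Neg a))))"
| A7: "derivable (Imp (And (Bullet (Imp a b)) (Bullet (Imp (Neg a) c))) (Nabla a))"
| R1: "derivable a \<Longrightarrow> derivable (Delta a)"
| R2: "derivable a \<Longrightarrow> derivable (Circ a)"
| R3: "derivable (Iff a b) \<Longrightarrow> derivable (Iff (Delta a) (Delta b))"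
| R4: "derivable (Iff a b) \<Longrightarrow> derivable (Iff (Circ a) (Circ b))"
| MP: "derivable (Imp a b) \<Longrightarrow> derivable a \<Longrightarrow> derivable b"

fun conjs :: "'p fm list \<Rightarrow> 'p fm" where
  "conjs [] = undefined"
| "conjs [g] = g"
| "conjs (g # gs) = And g (conjs gs)"

definition derives :: "'p fm set \<Rightarrow> 'p fm \<Rightarrow> bool" where
  "derives G a = (\<exists>gs. set gs \<subseteq> G \<and>
     ((gs = [] \<and> derivable a) \<or> (gs \<noteq> [] \<and> derivable (Imp (conjs gs) a))))"

definition kmodel :: "'s set \<Rightarrow> ('s \<times> 's) set \<Rightarrow> ('p \<Rightarrow> 's set) \<Rightarrow> bool" where
  "kmodel S R V = (S \<noteq> {} \<and> R \<subseteq> S \<times> S \<and> (\<forall>p. V p \<subseteq> S))"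

fun sat :: "'s set \<Rightarrow> ('s \<times> 's) set \<Rightarrow> ('p \<Rightarrow> 's set) \<Rightarrow> 's \<Rightarrow> 'p fm \<Rightarrow> bool" where
  "sat S R V s (Atom p) = (s \<in> V p)"
| "sat S R V s (Neg a) = (\<not> sat S R V s a)"
| "sat S R V s (And a b) = (sat S R V s a \<and> sat S R V s b)"
| "sat S R V s (Nabla a) =
     (\<exists>t u. (s, t) \<in> R \<and> (s, u) \<in> R \<and> sat S R V t a \<and> \<not> sat S R V u a)"
| "sat S R V s (Bullet a) = (sat S R V s a \<and> (\<exists>t. (s, t) \<in> R \<and> \<not> sat S R V t a))"

definition conseq :: "'s itself \<Rightarrow> 'p fm set \<Rightarrow> 'p fm \<Rightarrow> bool" where
  "conseq _ G a = (\<forall>(S :: 's set) R (V :: 'p \<Rightarrow> 's set) s.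
     kmodel S R V \<and> s \<in> S \<and> (\<forall>g\<in>G. sat S R V s g) \<longrightarrow> sat S R V s a)"

end

theory Submission
  imports Defs
begin

lemma peval_Imp[simp]: "peval f (Imp a b) = (peval f a \<longrightarrow> peval f b)"
  by (simp add: Imp_def)
lemma peval_Or[simp]: "peval f (Or a b) = (peval f a \<or> peval f b)"
  by (simp add: Or_def)
lemma peval_Iff[simp]: "peval f (Iff a b) = (peval f a \<longleftrightarrow> peval f b)"
  by (auto simp add: Iff_def)
lemma peval_Delta[simp]: "peval f (Delta a) = (\<not> f (Nabla a))"
  by (simp add: Delta_def)
lemma peval_Circ[simp]: "peval f (Circ a) = (\<not> f (Bullet a))"
  by (simp add: Circ_def)

fun impchain :: "'p fm list \<Rightarrow> 'p fm \<Rightarrow> 'p fm" where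
  "impchain [] a = a"
| "impchain (g # gs) a = Imp g (impchain gs a)"

lemma peval_impchain[simp]:
  "peval f (impchain L a) = ((\<forall>g\<in>set L. peval f g) \<longrightarrow> peval f a)"
  by (induct L) auto

lemma peval_conjs: "L \<noteq> [] \<Longrightarrow> peval f (conjs L) = (\<forall>g\<in>set L. peval f g)"
  by (induct L rule: conjs.induct) auto

lemma taut: "(\<And>f. peval f a) \<Longrightarrow> derivable a"
  by (rule A0) (simp add: tautology_def)

lemma taut_mp: "derivable a \<Longrightarrow> (\<And>f. peval f a \<Longrightarrow> peval f b) \<Longrightarrow> derivable b"
  by (rule MP[of a b]) (auto intro!: taut)

lemma taut_mp2: "derivable a \<Longrightarrow> derivable b \<Longrightarrow> (\<And>f. peval f a \<Longrightarrow> peval f b \<Longrightarrow> peval f c)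
   \<Longrightarrow> derivable c"
proof -
  assume a: "derivable a" and b: "derivable b" and h: "\<And>f. peval f a \<Longrightarrow> peval f b \<Longrightarrow> peval f c"
  have "derivable (Imp b c)" using a by (rule taut_mp) (use h in auto)
  thus ?thesis using b by (rule MP)
qed

section \<open>Soundness\<close>

lemma sat_peval: "peval (sat S R V s) a = sat S R V s a"
  by (induct a) auto

lemma sat_Imp[simp]: "sat S R V s (Imp a b) = (sat S R V s a \<longrightarrow> sat S R V s b)"
  by (simp add: Imp_def)
lemma sat_Or[simp]: "sat S R V s (Or a b) = (sat S R V s a \<or> sat S R V s b)"
  by (simp add: Or_def)
lemma sat_Iff[simp]: "sat S R V s (Iff a b) = (sat S R V s a \<longleftrightarrow> sat S R V s b)"
  by (auto simp add: Iff_def)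
lemma sat_Delta[simp]: "sat S R V s (Delta a) = (\<not> sat S R V s (Nabla a))"
  by (simp add: Delta_def)
lemma sat_Circ[simp]: "sat S R V s (Circ a) = (\<not> sat S R V s (Bullet a))"
  by (simp add: Circ_def)

lemma soundness_valid: "derivable a \<Longrightarrow> \<forall>s. sat S R V s a"
proof (induct a rule: derivable.induct)
  case (A0 a)
  then show ?case by (metis sat_peval tautology_def)
next
  case (R3 a b)
  then show ?case by simp
next
  case (R4 a b)
  then show ?case by simp
qed (auto; blast)+

lemma sat_conjs: "L \<noteq> [] \<Longrightarrow> sat S R V s (conjs L) = (\<forall>g\<in>set L. sat S R V s g)"
  by (induct L rule: conjs.induct) auto

lemma soundness: "derives G a \<Longrightarrow> conseq TYPE('s) G a"
  unfolding derives_def conseq_def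
  by (metis (no_types, lifting) sat_Imp sat_conjs soundness_valid subsetD)


section \<open>Consistency and maximal consistent sets\<close>

definition FF :: "'p fm" where "FF = And (Atom undefined) (Neg (Atom undefined))"

lemma peval_FF[simp]: "\<not> peval f FF"
  by (simp add: FF_def)

definition consistent :: "'p fm set \<Rightarrow> bool" where
  "consistent G = (\<not> (\<exists>L. set L \<subseteq> G \<and> derivable (impchain L FF)))"

definition mcs :: "'p fm set \<Rightarrow> bool" where
  "mcs m = (consistent m \<and> (\<forall>a. a \<in> m \<or> Neg a \<in> m))"

lemma mcs_closed:
  assumes m: "mcs m" and L: "set L \<subseteq> m" and d: "derivable (impchain L a)"
  shows "a \<in> m"
proof (rule ccontr)
  assume "a \<notin> m"
  then have "Neg a \<in> m" using m by (auto simp: mcs_def)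
  moreover have "derivable (impchain (Neg a # L) FF)"
    using d by (rule taut_mp) auto
  ultimately have "set (Neg a # L) \<subseteq> m" using L by auto
  then show False using m \<open>derivable (impchain (Neg a # L) FF)\<close> unfolding mcs_def consistent_def by blast
qed

lemma mcs_deriv: "mcs m \<Longrightarrow> derivable a \<Longrightarrow> a \<in> m"
  using mcs_closed[of m "[]" a] by simp

lemma mcs_taut: "mcs m \<Longrightarrow> set L \<subseteq> m \<Longrightarrow> (\<And>f. (\<forall>g\<in>set L. peval f g) \<Longrightarrow> peval f a) \<Longrightarrow> a \<in> m"
  by (rule mcs_closed, assumption+, rule taut) auto

lemma mcs_neg[simp]: "mcs m \<Longrightarrow> (Neg a \<in> m) = (a \<notin> m)"
proof
  assume m: "mcs m" and "Neg a \<in> m"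
  show "a \<notin> m"
  proof
    assume "a \<in> m"
    have d: "derivable (impchain [a, Neg a] FF)" by (rule taut) auto
    have "set [a, Neg a] \<subseteq> m" using \<open>a \<in> m\<close> \<open>Neg a \<in> m\<close> by auto
    then show False using m d unfolding mcs_def consistent_def by blast
  qed
next
  assume "mcs m" "a \<notin> m" then show "Neg a \<in> m" by (auto simp: mcs_def)
qed

lemma mcs_and[simp]: "mcs m \<Longrightarrow> (And a b \<in> m) = (a \<in> m \<and> b \<in> m)"
proof
  assume m: "mcs m" and h: "And a b \<in> m"
  have "a \<in> m" by (rule mcs_taut[OF m, of "[And a b]"]) (use h in auto)
  moreover have "b \<in> m" by (rule mcs_taut[OF m, of "[And a b]"]) (use h in auto)
  ultimately show "a \<in> m \<and> b \<in> m" ..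
next
  assume m: "mcs m" and h: "a \<in> m \<and> b \<in> m"
  show "And a b \<in> m" by (rule mcs_taut[OF m, of "[a, b]"]) (use h in auto)
qed

lemma mcs_imp[simp]: "mcs m \<Longrightarrow> (Imp a b \<in> m) = (a \<in> m \<longrightarrow> b \<in> m)"
  by (simp add: Imp_def)

lemma mcs_or[simp]: "mcs m \<Longrightarrow> (Or a b \<in> m) = (a \<in> m \<or> b \<in> m)"
  by (simp add: Or_def)

lemma mcs_iff[simp]: "mcs m \<Longrightarrow> (Iff a b \<in> m) = (a \<in> m \<longleftrightarrow> b \<in> m)"
  by (auto simp add: Iff_def)

lemma mcs_mp: "mcs m \<Longrightarrow> derivable (Imp a b) \<Longrightarrow> a \<in> m \<Longrightarrow> b \<in> m"
  using mcs_deriv by fastforce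

lemma split_lemma:
  "peval f (impchain L1 FF) \<Longrightarrow> peval f (impchain L2 FF) \<Longrightarrow>
   peval f (impchain (filter (\<lambda>x. x \<noteq> a) L1 @ filter (\<lambda>x. x \<noteq> Neg a) L2) FF)"
proof -
  assume h1: "peval f (impchain L1 FF)" and h2: "peval f (impchain L2 FF)"
  show ?thesis
  proof (cases "peval f a")
    case True
    then show ?thesis using h1 by auto
  next
    case False
    then have "peval f (Neg a)" by simp
    then show ?thesis using h2 by auto
  qed
qed

lemma filter_neg:
  "peval f (impchain L FF) \<Longrightarrow> peval f (impchain (filter (\<lambda>x. x \<noteq> Neg t) L) t)"
proof (cases "peval f t")
  case False
  then have "peval f (Neg t)" by simp
  moreover assume "peval f (impchain L FF)"
  ultimately show ?thesis by auto
qed simp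

section \<open>Lindenbaum\<close>

lemma lindenbaum:
  assumes c: "consistent G"
  shows "\<exists>m. mcs m \<and> G \<subseteq> m"
proof -
  let ?A = "{H. G \<subseteq> H \<and> consistent H}"
  have "\<exists>M\<in>?A. \<forall>X\<in>?A. M \<subseteq> X \<longrightarrow> X = M"
  proof (rule subset_Zorn)
    fix C assume ch: "subset.chain ?A C"
    show "\<exists>U\<in>?A. \<forall>X\<in>C. X \<subseteq> U"
    proof (cases "C = {}")
      case True then show ?thesis using c by auto
    next
      case False
      have "consistent (\<Union>C)"
        unfolding consistent_def
      proof
        assume "\<exists>L. set L \<subseteq> \<Union>C \<and> derivable (impchain L FF)"
        then obtain L where L: "set L \<subseteq> \<Union>C" "derivable (impchain L FF)" by blast
        obtain B where "B \<in> C" "set L \<subseteq> B"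
          using finite_subset_Union_chain[OF _ L(1) False ch] by auto
        moreover have "consistent B" using \<open>B \<in> C\<close> ch by (auto simp: subset_chain_def)
        ultimately show False using L(2) unfolding consistent_def by blast
      qed
      moreover have "G \<subseteq> \<Union>C" using False ch unfolding subset_chain_def by blast
      ultimately show ?thesis by blast
    qed
  qed
  then obtain M where M0: "M \<in> ?A" and mx0: "\<forall>X\<in>?A. M \<subseteq> X \<longrightarrow> X = M"
    by (rule bexE)
  have M: "G \<subseteq> M" "consistent M" using M0 by simp_all
  have mx: "X = M" if "G \<subseteq> X" "consistent X" "M \<subseteq> X" for X
    using mx0 that by simp
  have "\<forall>a. a \<in> M \<or> Neg a \<in> M"
  proof (rule allI, rule ccontr)
    fix a assume "\<not> (a \<in> M \<or> Neg a \<in> M)"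
    then have na: "a \<notin> M" "Neg a \<notin> M" by auto
    have n1: "\<not> consistent (insert a M)"
    proof
      assume "consistent (insert a M)"
      then have "insert a M = M" using mx[of "insert a M"] M(1) by blast
      then show False using na by blast
    qed
    have n2: "\<not> consistent (insert (Neg a) M)"
    proof
      assume "consistent (insert (Neg a) M)"
      then have "insert (Neg a) M = M" using mx[of "insert (Neg a) M"] M(1) by blast
      then show False using na by blast
    qed
    from n1 obtain L1 where L1: "set L1 \<subseteq> insert a M" "derivable (impchain L1 FF)"
      by (auto simp: consistent_def)
    from n2 obtain L2 where L2: "set L2 \<subseteq> insert (Neg a) M" "derivable (impchain L2 FF)"
      by (auto simp: consistent_def)
    let ?L = "filter (\<lambda>x. x \<noteq> a) L1 @ filter (\<lambda>x. x \<noteq> Neg a) L2"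
    have "derivable (impchain ?L FF)"
      using L1(2) L2(2) by (rule taut_mp2) (rule split_lemma)
    moreover have "set ?L \<subseteq> M" using L1(1) L2(1) by auto
    ultimately show False using M(2) by (auto simp: consistent_def)
  qed
  then show ?thesis using M by (auto simp: mcs_def)
qed


section \<open>Modal facts inside maximal consistent sets\<close>

lemma mcs_circ[simp]: "mcs m \<Longrightarrow> (Circ a \<in> m) = (Bullet a \<notin> m)"
  by (simp add: Circ_def)
lemma mcs_delta[simp]: "mcs m \<Longrightarrow> (Delta a \<in> m) = (Nabla a \<notin> m)"
  by (simp add: Delta_def)

lemma mcs_A1: "mcs m \<Longrightarrow> Bullet a \<in> m \<Longrightarrow> a \<in> m"
  using mcs_mp[OF _ A1] by blast

lemma mcs_A2: "mcs m \<Longrightarrow> (Nabla (Neg a) \<in> m) = (Nabla a \<in> m)"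
  using mcs_deriv[OF _ A2[of a]] by auto

lemma mcs_R4t: "mcs m \<Longrightarrow> (\<And>f. peval f a = peval f b) \<Longrightarrow> (Bullet a \<in> m) = (Bullet b \<in> m)"
proof -
  assume m: "mcs m" and h: "\<And>f. peval f a = peval f b"
  have "derivable (Iff a b)" by (rule taut) (simp add: h)
  then have "derivable (Iff (Circ a) (Circ b))" by (rule R4)
  then have "Iff (Circ a) (Circ b) \<in> m" by (rule mcs_deriv[OF m])
  then show ?thesis using m by simp
qed

lemma mcs_R4: "mcs m \<Longrightarrow> derivable (Iff a b) \<Longrightarrow> (Bullet a \<in> m) = (Bullet b \<in> m)"
proof -
  assume m: "mcs m" and h: "derivable (Iff a b)"
  from h have "derivable (Iff (Circ a) (Circ b))" by (rule R4)
  then have "Iff (Circ a) (Circ b) \<in> m" by (rule mcs_deriv[OF m])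
  then show ?thesis using m by simp
qed

lemma mcs_R3t: "mcs m \<Longrightarrow> (\<And>f. peval f a = peval f b) \<Longrightarrow> (Nabla a \<in> m) = (Nabla b \<in> m)"
proof -
  assume m: "mcs m" and h: "\<And>f. peval f a = peval f b"
  have "derivable (Iff a b)" by (rule taut) (simp add: h)
  then have "derivable (Iff (Delta a) (Delta b))" by (rule R3)
  then have "Iff (Delta a) (Delta b) \<in> m" by (rule mcs_deriv[OF m])
  then show ?thesis using m by simp
qed

lemma D1:
  assumes m: "mcs m" and d: "derivable (Imp p q)" and p: "p \<in> m" "Bullet p \<notin> m"
  shows "Bullet q \<notin> m"
proof
  assume q: "Bullet q \<in> m"
  have "derivable (Iff q (Imp (Imp q p) p))" using d by (rule taut_mp) auto
  then have "Bullet (Imp (Imp q p) p) \<in> m" using mcs_R4[OF m] q by blast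
  then have "Bullet p \<in> m" using mcs_mp[OF m A3[of "Imp q p" p]] p m by simp
  with p show False by simp
qed

lemma D2: "mcs m \<Longrightarrow> Bullet a \<notin> m \<Longrightarrow> Bullet b \<notin> m \<Longrightarrow> Bullet (And a b) \<notin> m"
  using mcs_mp[OF _ A5[of a b]] by auto

lemma D3:
  assumes m: "mcs m" and c: "Nabla c \<notin> m" "Bullet (Neg c) \<in> m"
  shows "Bullet (Or c a) \<notin> m"
proof
  assume "Bullet (Or c a) \<in> m"
  then have 1: "Bullet (Imp (Neg c) a) \<in> m" using mcs_R4t[OF m, of "Or c a" "Imp (Neg c) a"] by auto
  have 2: "Bullet (Imp (Neg (Neg c)) (Neg c)) \<in> m"
    using c mcs_R4t[OF m, of "Neg c" "Imp (Neg (Neg c)) (Neg c)"] by auto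
  have "Nabla (Neg c) \<in> m" using mcs_mp[OF m A7[of "Neg c" a "Neg c"]] 1 2 m by simp
  then show False using c mcs_A2[OF m] by simp
qed

lemma D4: "mcs m \<Longrightarrow> a \<in> m \<Longrightarrow> Bullet a \<notin> m \<Longrightarrow> Nabla a \<notin> m"
  using mcs_mp[OF _ A6[of a]] mcs_A1[of m "Neg a"] by auto

lemma D5:
  assumes m: "mcs m" and c: "Nabla c \<notin> m" "Bullet (Neg c) \<in> m"
  shows "Nabla (Or c a) \<notin> m"
proof (cases "a \<in> m")
  case True
  then show ?thesis using D3[OF m c, of a] D4[OF m, of "Or c a"] m by simp
next
  case False
  show ?thesis
  proof
    assume "Nabla (Or c a) \<in> m"
    then have "Nabla (Neg (And (Neg c) (Or c (Neg a)))) \<in> m"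
      using mcs_R3t[OF m, of "Or c a" "Neg (And (Neg c) (Or c (Neg a)))"] by auto
    then have "Nabla (And (Neg c) (Or c (Neg a))) \<in> m" using mcs_A2[OF m] by simp
    then have "Nabla (Neg c) \<in> m \<or> Nabla (Or c (Neg a)) \<in> m"
      using mcs_mp[OF m A4] m by fastforce
    moreover have "Nabla (Neg c) \<notin> m" using c mcs_A2[OF m] by simp
    moreover have "Nabla (Or c (Neg a)) \<notin> m"
      using D3[OF m c, of "Neg a"] D4[OF m, of "Or c (Neg a)"] m False by simp
    ultimately show False by blast
  qed
qed

section \<open>Canonical model\<close>

definition T1 :: "'p fm set \<Rightarrow> 'p fm set" where "T1 m = {a. a \<in> m \<and> Bullet a \<notin> m}"
definition T2 :: "'p fm set \<Rightarrow> 'p fm set" where "T2 m = {c. Nabla c \<notin> m \<and> Bullet (Neg c) \<in> m}"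
definition TT :: "'p fm set \<Rightarrow> 'p fm set" where "TT m = T1 m \<union> T2 m"

lemma lemA: "mcs m \<Longrightarrow> set L \<subseteq> TT m \<Longrightarrow> a \<in> m \<Longrightarrow> derivable (impchain L a) \<Longrightarrow> Bullet a \<notin> m"
proof (induct L arbitrary: a)
  case Nil
  then have "derivable (Circ a)" by (intro R2) simp
  then show ?case using Nil mcs_deriv by fastforce
next
  case (Cons x L)
  note m = Cons.prems(1)
  have "derivable (impchain L (Imp x a))" using Cons.prems(4) by (rule taut_mp) auto
  moreover have "Imp x a \<in> m" using Cons.prems by simp
  ultimately have IH: "Bullet (Imp x a) \<notin> m" using Cons by auto
  have o: "Or x a \<in> m" using Cons.prems by simp
  have bo: "Bullet (Or x a) \<notin> m"
  proof (cases "x \<in> T1 m")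
    case True then have "x \<in> m" "Bullet x \<notin> m" by (auto simp: T1_def)
    moreover have "derivable (Imp x (Or x a))" by (rule taut) simp
    ultimately show ?thesis using D1[OF m] by blast
  next
    case False then have "x \<in> T2 m" using Cons.prems(2) by (auto simp: TT_def)
    then show ?thesis using D3[OF m] by (auto simp: T2_def)
  qed
  have "Bullet (And (Imp x a) (Or x a)) \<notin> m" using D2[OF m IH bo] .
  moreover have "And (Imp x a) (Or x a) \<in> m" using o \<open>Imp x a \<in> m\<close> m by simp
  moreover have "derivable (Imp (And (Imp x a) (Or x a)) a)" by (rule taut) auto
  ultimately show ?case using D1[OF m] by blast
qed

lemma lemB:
  assumes m: "mcs m" and L: "set L \<subseteq> TT m" and c: "c \<in> set L" "c \<in> T2 m"
    and t: "t \<notin> m" and d: "derivable (impchain L t)"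
  shows "Nabla t \<notin> m"
proof
  assume "Nabla t \<in> m"
  then have "Nabla (And (Or c t) (Or t (Neg c))) \<in> m"
    using mcs_R3t[OF m, of t "And (Or c t) (Or t (Neg c))"] by auto
  then have "Nabla (Or c t) \<in> m \<or> Nabla (Or t (Neg c)) \<in> m"
    using mcs_mp[OF m A4] m by fastforce
  moreover have "Nabla (Or c t) \<notin> m" using D5[OF m] c by (auto simp: T2_def)
  moreover have nc: "Neg c \<in> m" using c mcs_A1[OF m] by (auto simp: T2_def)
  moreover have "Nabla (Or t (Neg c)) \<notin> m"
  proof
    assume "Nabla (Or t (Neg c)) \<in> m"
    then have "Bullet (Or t (Neg c)) \<in> m \<or> Bullet (Neg (Or t (Neg c))) \<in> m"
      using mcs_mp[OF m A6] m by fastforce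
    moreover have "Bullet (Neg (Or t (Neg c))) \<notin> m"
      using mcs_A1[OF m, of "Neg (Or t (Neg c))"] nc m by auto
    moreover have "Bullet (Or t (Neg c)) \<notin> m"
    proof (rule lemA[OF m L])
      show "Or t (Neg c) \<in> m" using nc m by simp
      show "derivable (impchain L (Or t (Neg c)))" using d by (rule taut_mp) auto
    qed
    ultimately show False by blast
  qed
  ultimately show False by blast
qed

lemma lemC:
  assumes m: "mcs m" and n: "Nabla t \<in> m"
  shows "consistent (insert t (TT m))"
  unfolding consistent_def
proof (rule notI, elim exE conjE)
  fix L assume L: "set L \<subseteq> insert t (TT m)" "derivable (impchain L FF)"
  let ?L = "filter (\<lambda>x. x \<noteq> t) L"
  have sL: "set ?L \<subseteq> TT m" using L by auto
  have d: "derivable (impchain ?L (Neg t))" using L(2) by (rule taut_mp) auto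
  show False
  proof (cases "Neg t \<in> m")
    case True
    then have "Bullet (Neg t) \<notin> m" using lemA[OF m sL True d] by blast
    moreover have "Bullet t \<notin> m" using True mcs_A1[OF m, of t] m by auto
    ultimately show False using mcs_mp[OF m A6[of t]] n m by simp
  next
    case False
    show False
    proof (cases "\<exists>c\<in>set ?L. c \<in> T2 m")
      case True
      then obtain c where "c \<in> set ?L" "c \<in> T2 m" by blast
      then have "Nabla (Neg t) \<notin> m" using lemB[OF m sL _ _ False d] by blast
      then show False using n mcs_A2[OF m] by simp
    next
      case F2: False
      then have "set ?L \<subseteq> m" using sL by (auto simp: TT_def T1_def)
      then have "Neg t \<in> m" using mcs_closed[OF m _ d] by blast
      then show False using False by simp
    qed
  qed
qed

lemma lemE:
  assumes m: "mcs m" and b: "Bullet t \<in> m"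
  shows "consistent (insert (Neg t) (TT m))"
  unfolding consistent_def
proof (rule notI, elim exE conjE)
  fix L assume L: "set L \<subseteq> insert (Neg t) (TT m)" "derivable (impchain L FF)"
  let ?L = "filter (\<lambda>x. x \<noteq> Neg t) L"
  have sL: "set ?L \<subseteq> TT m" using L by auto
  have d: "derivable (impchain ?L t)" using L(2) by (rule taut_mp) (rule filter_neg)
  have "t \<in> m" using mcs_A1[OF m b] .
  then show False using lemA[OF m sL _ d] b by blast
qed


definition CS :: "'p fm set set set" where "CS = {{n} | n. mcs n}"
definition CR :: "('p fm set set \<times> 'p fm set set) set" where
  "CR = {({n}, {n'}) | n n'. mcs n \<and> mcs n' \<and> TT n \<subseteq> n'}"
definition CV :: "'p \<Rightarrow> 'p fm set set set" where "CV p = {{n} | n. mcs n \<and> Atom p \<in> n}"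

lemma CR_iff: "mcs n \<Longrightarrow> (({n}, t) \<in> CR) = (\<exists>n'. t = {n'} \<and> mcs n' \<and> TT n \<subseteq> n')"
  by (auto simp: CR_def)

lemma kmodel_C:
  fixes n :: "'p fm set"
  assumes n: "mcs n"
  shows "kmodel (CS :: 'p fm set set set) CR CV"
proof -
  have "{n} \<in> (CS :: 'p fm set set set)" unfolding CS_def using n by blast
  then have "(CS :: 'p fm set set set) \<noteq> {}" by blast
  moreover have "(CR :: ('p fm set set \<times> 'p fm set set) set) \<subseteq> CS \<times> CS" unfolding CR_def CS_def by blast
  moreover have "\<forall>p. (CV p :: 'p fm set set set) \<subseteq> CS" unfolding CV_def CS_def by blast
  ultimately show ?thesis by (simp add: kmodel_def)
qed

lemma nabla_canon:
  assumes m: "mcs m"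
  shows "(\<exists>n1 n2. mcs n1 \<and> TT m \<subseteq> n1 \<and> mcs n2 \<and> TT m \<subseteq> n2 \<and> a \<in> n1 \<and> a \<notin> n2) = (Nabla a \<in> m)"
proof
  assume "Nabla a \<in> m"
  moreover have "Nabla (Neg a) \<in> m" using calculation mcs_A2[OF m] by simp
  ultimately obtain n1 n2 where "mcs n1" "insert a (TT m) \<subseteq> n1" "mcs n2" "insert (Neg a) (TT m) \<subseteq> n2"
    using lemC[OF m] lindenbaum by meson
  then show "\<exists>n1 n2. mcs n1 \<and> TT m \<subseteq> n1 \<and> mcs n2 \<and> TT m \<subseteq> n2 \<and> a \<in> n1 \<and> a \<notin> n2" by auto
next
  assume "\<exists>n1 n2. mcs n1 \<and> TT m \<subseteq> n1 \<and> mcs n2 \<and> TT m \<subseteq> n2 \<and> a \<in> n1 \<and> a \<notin> n2"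
  then obtain n1 n2 where n: "mcs n1" "TT m \<subseteq> n1" "mcs n2" "TT m \<subseteq> n2" "a \<in> n1" "a \<notin> n2" by blast
  show "Nabla a \<in> m"
  proof (rule ccontr)
    assume na: "Nabla a \<notin> m"
    show False
    proof (cases "a \<in> m")
      case True
      show False
      proof (cases "Bullet a \<in> m")
        case False
        then have "a \<in> TT m" using True by (auto simp: TT_def T1_def)
        then show False using n by auto
      next
        case True
        then have "Bullet (Neg (Neg a)) \<in> m" using mcs_R4t[OF m, of a "Neg (Neg a)"] by auto
        moreover have "Nabla (Neg a) \<notin> m" using na mcs_A2[OF m] by simp
        ultimately have "Neg a \<in> TT m" by (auto simp: TT_def T2_def)
        then show False using n by auto
      qed
    next
      case False
      then have nm: "Neg a \<in> m" using m by simp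
      show False
      proof (cases "Bullet (Neg a) \<in> m")
        case False
        then have "Neg a \<in> TT m" using nm by (auto simp: TT_def T1_def)
        then show False using n by auto
      next
        case True
        then have "a \<in> TT m" using na by (auto simp: TT_def T2_def)
        then show False using n by auto
      qed
    qed
  qed
qed

lemma bullet_canon:
  assumes m: "mcs m"
  shows "(a \<in> m \<and> (\<exists>n. mcs n \<and> TT m \<subseteq> n \<and> a \<notin> n)) = (Bullet a \<in> m)"
proof
  assume b: "Bullet a \<in> m"
  then obtain n where "mcs n" "insert (Neg a) (TT m) \<subseteq> n"
    using lemE[OF m] lindenbaum by meson
  then show "a \<in> m \<and> (\<exists>n. mcs n \<and> TT m \<subseteq> n \<and> a \<notin> n)" using mcs_A1[OF m b] by auto
next
  assume h: "a \<in> m \<and> (\<exists>n. mcs n \<and> TT m \<subseteq> n \<and> a \<notin> n)"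
  show "Bullet a \<in> m"
  proof (rule ccontr)
    assume "Bullet a \<notin> m"
    then have "a \<in> TT m" using h by (auto simp: TT_def T1_def)
    then show False using h by auto
  qed
qed

lemma truth: "mcs n \<Longrightarrow> sat CS CR CV {n} a = (a \<in> n)"
proof (induct a arbitrary: n)
  case (Atom p)
  then show ?case by (auto simp: CV_def)
next
  case (Neg a)
  then show ?case by simp
next
  case (And a b)
  then show ?case by simp
next
  case (Nabla a)
  have "sat CS CR CV {n} (Nabla a) =
    (\<exists>n1 n2. mcs n1 \<and> TT n \<subseteq> n1 \<and> mcs n2 \<and> TT n \<subseteq> n2 \<and> a \<in> n1 \<and> a \<notin> n2)"
    using Nabla by (auto simp: CR_iff)
  then show ?case using nabla_canon[OF Nabla.prems] by simp
next
  case (Bullet a)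
  have "sat CS CR CV {n} (Bullet a) = (a \<in> n \<and> (\<exists>n'. mcs n' \<and> TT n \<subseteq> n' \<and> a \<notin> n'))"
    using Bullet by (auto simp: CR_iff)
  then show ?case using bullet_canon[OF Bullet.prems] by simp
qed

lemma completeness:
  fixes G :: "'p fm set" and a :: "'p fm"
  assumes c: "conseq TYPE('p fm set set) G a"
  shows "derives G a"
proof (rule ccontr)
  assume nd: "\<not> derives G a"
  have "consistent (insert (Neg a) G)"
    unfolding consistent_def
  proof (rule notI, elim exE conjE)
    fix L assume L: "set L \<subseteq> insert (Neg a) G" "derivable (impchain L FF)"
    let ?L = "filter (\<lambda>x. x \<noteq> Neg a) L"
    have sL: "set ?L \<subseteq> G" using L by auto
    have d: "derivable (impchain ?L a)" using L(2) by (rule taut_mp) (rule filter_neg)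
    show False
    proof (cases "?L = []")
      case True
      then show False using nd d sL unfolding derives_def by auto
    next
      case False
      have "derivable (Imp (conjs ?L) a)" using d by (rule taut_mp) (simp add: peval_conjs[OF False])
      then show False using nd sL False unfolding derives_def by blast
    qed
  qed
  then obtain n where n: "mcs n" "insert (Neg a) G \<subseteq> n" using lindenbaum by blast
  have "{n} \<in> CS" unfolding CS_def using n by blast
  moreover have "\<forall>g\<in>G. sat CS CR CV {n} g" using n truth by blast
  ultimately have "sat CS CR CV {n} a"
    using c[unfolded conseq_def, rule_format, of CS CR CV "{n}"] kmodel_C[OF n(1)] by blast
  then have "a \<in> n" using truth[OF n(1)] by simp
  then show False using n by auto
qed

theorem theorem1:
  fixes G :: "'p fm set" and a :: "'p fm"
  shows "(derives G a \<longrightarrow> conseq TYPE('s) G a)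
       \<and> (conseq TYPE('p fm set set) G a \<longrightarrow> derives G a)"
  using soundness completeness by blast

end
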